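(* Let $A=(a_{ij})_{i,j\in I}$ be a generalized Cartan matrix with finite index set $I$, and let $U=(u_{ij})_{i,j\in I}$ be a complex matrix satisfying: (0) $u_{ij}=0$ if $i=j$ or $a_{ij}=0$; (1) $u_{ij}=-u_{ji}$ if $(a_{ij},a_{ji})=(-1,-1)$; (2) $u_{ij}\in\{-u_{ji},-2u_{ji}\}$ if $(a_{ij},a_{ji})=(-2,-1)$; (3) $u_{ij}\in\{-u_{ji},-\tfrac32u_{ji},-2u_{ji},-3u_{ji}\}$ if $(a_{ij},a_{ji})=(-3,-1)$. For each $i\in I$ let $s_i$ be the $\mathbb{C}$-automorphism of the field $\mathbb{C}(\alpha;f)$ determined by $$s_i(\alpha_j)=\alpha_j-a_{ij}\alpha_i,\qquad s_i(f_j)=f_j+\frac{\alpha_i}{f_i}\,u_{ij}\qquad(j\in I).$$ Then $s_i\mapsto s_i$ defines a representation of the Coxeter group $W(A)$ on $\mathbb{C}(\alpha;f)$ by field automorphisms; i.e. $s_i^2=\mathrm{id}$ for all $i$ and $(s_is_j)^{m_{ij}}=\mathrm{id}$ for all $i\neq j$ with $m_{ij}<\infty$.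
   Context: A generalized Cartan matrix $A=(a_{ij})_{i,j\in I}$ is an integer matrix with $a_{jj}=2$, $a_{ij}\le 0$ for $i\ne j$, and $a_{ij}=0\iff a_{ji}=0$. $\mathbb{C}(\alpha;f)$ denotes the field of rational functions over $\mathbb{C}$ in independent variables $\alpha_j,f_j$ ($j\in I$). The Coxeter group $W(A)$ is generated by $s_i$ ($i\in I$) with relations $s_i^2=1$ and $(s_is_j)^{m_{ij}}=1$ for $i\neq j$, where $m_{ij}=2,3,4,6,\infty$ according as $a_{ij}a_{ji}=0,1,2,3,\ge4$ (no relation when $m_{ij}=\infty$). *)

theory Defs
  imports "HOL-Library.Poly_Mapping" "HOL-Library.Product_Lexorder"
          "HOL-Computational_Algebra.Fraction_Field" Complex_Main
begin

definition gcm :: "('i \<Rightarrow> 'i \<Rightarrow> int) \<Rightarrow> bool" where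
  "gcm A \<longleftrightarrow> (\<forall>j. A j j = 2) \<and> (\<forall>i j. i \<noteq> j \<longrightarrow> A i j \<le> 0)
      \<and> (\<forall>i j. A i j = 0 \<longleftrightarrow> A j i = 0)"

text \<open>Coxeter exponents m_ij (None encodes infinity).\<close>
definition cox_m :: "('i \<Rightarrow> 'i \<Rightarrow> int) \<Rightarrow> 'i \<Rightarrow> 'i \<Rightarrow> nat option" where
  "cox_m A i j = (let p = A i j * A j i in
      if p = 0 then Some 2 else if p = 1 then Some 3 else if p = 2 then Some 4
      else if p = 3 then Some 6 else None)"

text \<open>Polynomial ring C[alpha_j, f_j] in the variables (False,j) = alpha_j, (True,j) = f_j,
  and its fraction field C(alpha;f).\<close>
type_synonym 'i cpoly = "((bool \<times> 'i) \<Rightarrow>\<^sub>0 nat) \<Rightarrow>\<^sub>0 complex"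
type_synonym 'i ratfun = "'i cpoly fract"

definition rconst :: "complex \<Rightarrow> ('i::linorder) ratfun" where
  "rconst c = Fraction_Field.Fract (Poly_Mapping.single 0 c) 1"

definition rvar :: "bool \<times> ('i::linorder) \<Rightarrow> 'i ratfun" where
  "rvar v = Fraction_Field.Fract (Poly_Mapping.single (Poly_Mapping.single v 1) 1) 1"

abbreviation ralpha :: "('i::linorder) \<Rightarrow> 'i ratfun" where
  "ralpha j \<equiv> rvar (False, j)"

abbreviation rf :: "('i::linorder) \<Rightarrow> 'i ratfun" where
  "rf j \<equiv> rvar (True, j)"

definition C_alg_hom :: "(('i::linorder) ratfun \<Rightarrow> 'i ratfun) \<Rightarrow> bool" where
  "C_alg_hom \<sigma> \<longleftrightarrow> (\<forall>x y. \<sigma> (x + y) = \<sigma> x + \<sigma> y) \<and> (\<forall>x y. \<sigma> (x * y) = \<sigma> x * \<sigma> y)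
      \<and> \<sigma> 1 = 1 \<and> (\<forall>c. \<sigma> (rconst c) = rconst c)"

definition is_s_family :: "('i \<Rightarrow> 'i \<Rightarrow> int) \<Rightarrow> ('i \<Rightarrow> 'i \<Rightarrow> complex)
    \<Rightarrow> (('i::linorder) \<Rightarrow> 'i ratfun \<Rightarrow> 'i ratfun) \<Rightarrow> bool" where
  "is_s_family A U s \<longleftrightarrow> (\<forall>i. C_alg_hom (s i) \<and> (\<forall>j.
      s i (ralpha j) = ralpha j - rconst (of_int (A i j)) * ralpha i \<and>
      s i (rf j) = rf j + (ralpha i / rf i) * rconst (U i j)))"

end

theory Submission
  imports Defs
begin


definition iota :: "('i::linorder) cpoly \<Rightarrow> 'i ratfun" where
  "iota P = Fraction_Field.Fract P 1"

definition pvar :: "bool \<times> ('i::linorder) \<Rightarrow> 'i cpoly" where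
  "pvar v = Poly_Mapping.single (Poly_Mapping.single v 1) 1"

lemma iota_add: "iota (p + q) = iota p + iota q" by (simp add: iota_def)
lemma iota_mult: "iota (p * q) = iota p * iota q" by (simp add: iota_def)
lemma iota_diff: "iota (p - q) = iota p - iota q" by (simp add: iota_def)
lemma iota_1: "iota 1 = 1" by (simp add: iota_def fract_collapse)
lemma iota_0: "iota 0 = 0" by (simp add: iota_def fract_collapse)
lemma iota_pow: "iota (p ^ n) = iota p ^ n" by (induct n) (simp_all add: iota_1 iota_mult)
lemma iota_inj: "iota p = iota q \<longleftrightarrow> p = q" by (simp add: iota_def eq_fract)
lemma iota_const: "iota (Poly_Mapping.single 0 c) = rconst c" by (simp add: iota_def rconst_def)
lemma iota_var: "iota (pvar v) = rvar v" by (simp add: iota_def rvar_def pvar_def)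

lemma Fract_iota: "b \<noteq> 0 \<Longrightarrow> Fraction_Field.Fract a b = iota a / iota b"
  by (simp add: iota_def)

lemma rconst_add: "rconst (a + b) = rconst a + rconst b"
  by (simp add: rconst_def single_add)
lemma rconst_mult: "rconst (a * b) = rconst a * rconst b"
  by (simp add: rconst_def mult_single)
lemma rconst_0: "rconst 0 = 0" by (simp add: rconst_def fract_collapse)
lemma rconst_1: "rconst 1 = 1" by (simp add: rconst_def fract_collapse)
lemma rconst_minus: "rconst (- a) = - rconst a" by (simp add: rconst_def single_uminus)
lemma rconst_diff: "rconst (a - b) = rconst a - rconst b" by (simp add: rconst_def single_diff)
lemma rconst_of_nat: "rconst (of_nat n) = of_nat n"
  by (induct n) (simp_all add: rconst_add rconst_1 rconst_0)
lemma rconst_of_int: "rconst (of_int k) = of_int k"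
  by (cases k rule: int_cases) (simp_all add: rconst_minus rconst_of_nat rconst_diff rconst_add rconst_1)
lemma rconst_inj: "rconst a = rconst b \<longleftrightarrow> a = b"
  by (simp add: rconst_def eq_fract) (metis lookup_single_eq)
lemma rconst_numeral: "rconst (numeral n) = numeral n"
  using rconst_of_nat[of "numeral n"] by simp
lemma rconst_divide: "rconst (a / b) = rconst a / rconst b"
proof (cases "b = 0")
  case True then show ?thesis by (simp add: rconst_0)
next
  case False
  have "rconst (a / b) * rconst b = rconst a" by (simp add: rconst_mult[symmetric] False)
  moreover have "rconst b \<noteq> 0" using False rconst_inj[of b 0] by (simp add: rconst_0)
  ultimately show ?thesis by (metis nonzero_mult_div_cancel_right)
qed

lemma rvar_nonzero: "rvar v \<noteq> 0"
  by (simp add: rvar_def eq_fract Zero_fract_def) (metis lookup_single_eq lookup_zero one_neq_zero)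

lemma update_single_add: "a \<notin> Poly_Mapping.keys f \<Longrightarrow> Poly_Mapping.update a b f = Poly_Mapping.single a b + f"
  by (rule poly_mapping_eqI) (auto simp: lookup_update lookup_add lookup_single in_keys_iff)

lemma single_nat_pow: "Poly_Mapping.single (Poly_Mapping.single v k) (1::'c::comm_semiring_1)
   = (Poly_Mapping.single (Poly_Mapping.single v 1) 1) ^ k"
proof (induct k)
  case 0 then show ?case by simp
next
  case (Suc k)
  have "Poly_Mapping.single v (Suc k) = Poly_Mapping.single v 1 + Poly_Mapping.single v k"
    by (simp add: single_add[symmetric])
  moreover have "Poly_Mapping.single (Poly_Mapping.single v 1 + Poly_Mapping.single v k) (1::'c)
     = Poly_Mapping.single (Poly_Mapping.single v 1) 1 * Poly_Mapping.single (Poly_Mapping.single v k) 1"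
    by (simp add: mult_single)
  ultimately show ?case using Suc by simp
qed

lemma cpoly_induct:
  fixes Q :: "(('v \<Rightarrow>\<^sub>0 nat) \<Rightarrow>\<^sub>0 'c::comm_semiring_1) \<Rightarrow> bool"
  assumes cst: "\<And>c. Q (Poly_Mapping.single 0 c)"
    and var: "\<And>v. Q (Poly_Mapping.single (Poly_Mapping.single v 1) 1)"
    and add: "\<And>p q. Q p \<Longrightarrow> Q q \<Longrightarrow> Q (p + q)"
    and mult: "\<And>p q. Q p \<Longrightarrow> Q q \<Longrightarrow> Q (p * q)"
  shows "Q P"
proof -
  have pw: "Q (p ^ k)" if "Q p" for p k
  proof (induct k)
    case 0 then show ?case using cst[of 1] by simp
  next
    case (Suc k) then show ?case using mult that by simp
  qed
  have mon: "Q (Poly_Mapping.single m 1)" for m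
  proof (induct m rule: update_induct)
    case const then show ?case using cst[of 1] by simp
  next
    case (update f a b)
    have "Poly_Mapping.single (Poly_Mapping.update a b f) (1::'c)
        = Poly_Mapping.single (Poly_Mapping.single a b) 1 * Poly_Mapping.single f 1"
      using update by (simp add: update_single_add mult_single)
    moreover have "Q (Poly_Mapping.single (Poly_Mapping.single a b) 1)"
      unfolding single_nat_pow[of a b] by (rule pw[OF var])
    ultimately show ?case using update(3) mult by metis
  qed
  show ?thesis
  proof (induct P rule: update_induct)
    case const then show ?case using cst[of 0] by simp
  next
    case (update f a b)
    have "Poly_Mapping.single a b = Poly_Mapping.single 0 b * Poly_Mapping.single a (1::'c)"
      by (simp add: mult_single)
    then show ?case using update by (simp add: update_single_add add mult mon cst)
  qed
qed


definition mon :: "(bool \<times> ('i::{finite,linorder}) \<Rightarrow> 'i ratfun) \<Rightarrow> ((bool \<times> 'i) \<Rightarrow>\<^sub>0 nat) \<Rightarrow> 'i ratfun" where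
  "mon g m = (\<Prod>v\<in>UNIV. g v ^ Poly_Mapping.lookup m v)"

definition ev :: "(bool \<times> ('i::{finite,linorder}) \<Rightarrow> 'i ratfun) \<Rightarrow> 'i cpoly \<Rightarrow> 'i ratfun" where
  "ev g P = (\<Sum>m\<in>Poly_Mapping.keys P. rconst (Poly_Mapping.lookup P m) * mon g m)"

lemma mon_0: "mon g 0 = 1" by (simp add: mon_def)
lemma mon_add: "mon g (a + b) = mon g a * mon g b"
  by (simp add: mon_def lookup_add power_add prod.distrib)
lemma mon_var: "mon g (Poly_Mapping.single v 1) = g v"
proof -
  have "mon g (Poly_Mapping.single v 1) = (\<Prod>w\<in>UNIV. if w = v then g w else 1)"
    unfolding mon_def by (rule prod.cong) (auto simp: lookup_single when_def)
  also have "\<dots> = g v" by simp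
  finally show ?thesis .
qed

lemma ev_super: "finite S \<Longrightarrow> Poly_Mapping.keys P \<subseteq> S \<Longrightarrow>
   ev g P = (\<Sum>m\<in>S. rconst (Poly_Mapping.lookup P m) * mon g m)"
  unfolding ev_def
  by (rule sum.mono_neutral_left) (auto simp: in_keys_iff rconst_0)

lemma ev_add: "ev g (p + q) = ev g p + ev g q"
proof -
  let ?S = "Poly_Mapping.keys p \<union> Poly_Mapping.keys q"
  have f: "finite ?S" by simp
  have "ev g (p + q) = (\<Sum>m\<in>?S. rconst (Poly_Mapping.lookup (p + q) m) * mon g m)"
    using keys_add[of p q] by (intro ev_super f) auto
  also have "\<dots> = (\<Sum>m\<in>?S. rconst (Poly_Mapping.lookup p m) * mon g m)
              + (\<Sum>m\<in>?S. rconst (Poly_Mapping.lookup q m) * mon g m)"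
    by (simp add: lookup_add rconst_add distrib_right sum.distrib)
  also have "\<dots> = ev g p + ev g q"
    by (simp add: ev_super[symmetric])
  finally show ?thesis .
qed

lemma ev_0: "ev g 0 = 0" by (simp add: ev_def)

lemma ev_single: "ev g (Poly_Mapping.single m c) = rconst c * mon g m"
  by (subst ev_super[of "{m}"]) auto

lemma ev_const: "ev g (Poly_Mapping.single 0 c) = rconst c"
  by (simp add: ev_single mon_0)
lemma ev_1: "ev g 1 = 1"
  using ev_const[of g 1] by (simp add: rconst_1)
lemma ev_var: "ev g (pvar v) = g v"
  unfolding pvar_def ev_single mon_var by (simp add: rconst_1)

lemma ev_mult_single: "ev g (Poly_Mapping.single a b * Q) = rconst b * mon g a * ev g Q"
proof (induct Q rule: update_induct)
  case const then show ?case by (simp add: ev_0)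
next
  case (update f c d)
  then show ?case
    by (simp add: update_single_add distrib_left ev_add mult_single ev_single mon_add rconst_mult algebra_simps)
qed

lemma ev_mult: "ev g (p * q) = ev g p * ev g q"
proof (induct p rule: update_induct)
  case const then show ?case by (simp add: ev_0)
next
  case (update f c d)
  then show ?case
    by (simp add: update_single_add distrib_right ev_add ev_mult_single ev_single)
qed

lemma ev_minus: "ev g (- p) = - ev g p"
proof -
  have "ev g p + ev g (- p) = 0" using ev_add[of g p "-p"] by (simp add: ev_0)
  then show ?thesis by (simp add: add_eq_0_iff)
qed
lemma ev_diff: "ev g (p - q) = ev g p - ev g q"
  using ev_add[of g p "-q"] by (simp add: ev_minus)
lemma ev_pow: "ev g (p ^ n) = ev g p ^ n"
  by (induct n) (simp_all add: ev_1 ev_mult)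


definition gimg :: "(('i::{finite,linorder}) \<Rightarrow> 'i \<Rightarrow> int) \<Rightarrow> ('i \<Rightarrow> 'i \<Rightarrow> complex) \<Rightarrow> 'i \<Rightarrow> bool \<times> 'i \<Rightarrow> 'i ratfun" where
  "gimg A U i v = (if fst v then rf (snd v) + ralpha i / rf i * rconst (U i (snd v))
                   else ralpha (snd v) - rconst (of_int (A i (snd v))) * ralpha i)"

definition DD where "DD A U i = ev (gimg A U i)"

lemma DD_var_f: "DD A U i (pvar (True, j)) = rf j + ralpha i / rf i * rconst (U i j)"
  by (simp add: DD_def ev_var gimg_def)
lemma DD_var_a: "DD A U i (pvar (False, j)) = ralpha j - rconst (of_int (A i j)) * ralpha i"
  by (simp add: DD_def ev_var gimg_def)

lemma iota_of_int: "iota (of_int k) = of_int k"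
  using iota_const[of "of_int k"] by (simp add: rconst_of_int)

lemmas DD_hom = ev_add[where g="gimg A U i" for A U i, folded DD_def]
  ev_mult[where g="gimg A U i" for A U i, folded DD_def]
  ev_diff[where g="gimg A U i" for A U i, folded DD_def]
  ev_minus[where g="gimg A U i" for A U i, folded DD_def]
  ev_pow[where g="gimg A U i" for A U i, folded DD_def]
  ev_const[where g="gimg A U i" for A U i, folded DD_def]
  ev_1[where g="gimg A U i" for A U i, folded DD_def]
  ev_0[where g="gimg A U i" for A U i, folded DD_def]

lemma DD_of_int: "DD A U i (of_int k) = of_int k"
  using DD_hom(6)[of A U i "of_int k"] by (simp add: rconst_of_int)

lemma iota_rep_add:
  fixes x y :: "'i::{finite,linorder} ratfun"
  assumes "x = iota Q / rf i ^ N" "y = iota Q' / rf i ^ N'"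
  shows "x + y = iota (Q * pvar (True, i) ^ N' + Q' * pvar (True, i) ^ N) / rf i ^ (N + N')"
  using rvar_nonzero[of "(True,i)"] unfolding assms
  by (simp add: iota_add iota_mult iota_pow iota_var field_simps power_add)

lemma iota_rep_mult:
  fixes x y :: "'i::{finite,linorder} ratfun"
  assumes "x = iota Q / rf i ^ N" "y = iota Q' / rf i ^ N'"
  shows "x * y = iota (Q * Q') / rf i ^ (N + N')"
  using rvar_nonzero[of "(True,i)"] unfolding assms
  by (simp add: iota_mult field_simps power_add)

lemma DD_rep:
  fixes A :: "('i::{finite,linorder}) \<Rightarrow> 'i \<Rightarrow> int"
  shows "\<exists>Q N. DD A U i P = iota Q / rf i ^ N"
proof (induct P rule: cpoly_induct)
  case (1 c)
  show ?case by (rule exI[of _ "Poly_Mapping.single 0 c"], rule exI[of _ 0])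
    (simp add: DD_hom iota_const)
next
  case (2 v)
  obtain b j where v: "v = (b, j)" by (cases v)
  show ?case
  proof (cases b)
    case True
    have "DD A U i (pvar v) = iota (pvar (True, j) * pvar (True, i) + pvar (False, i) * Poly_Mapping.single 0 (U i j)) / rf i ^ 1"
      using v True rvar_nonzero[of "(True,i)"]
      by (simp add: DD_var_f iota_add iota_mult iota_var iota_const field_simps)
    then show ?thesis unfolding pvar_def by blast
  next
    case False
    have "DD A U i (pvar v) = iota (pvar (False, j) - Poly_Mapping.single 0 (of_int (A i j)) * pvar (False, i)) / rf i ^ 0"
      using v False
      by (simp add: DD_var_a iota_diff iota_mult iota_var iota_const iota_of_int rconst_of_int)
    then show ?thesis unfolding pvar_def by blast
  qed
next
  case (3 p q)
  then obtain Q N Q' N' where "DD A U i p = iota Q / rf i ^ N" "DD A U i q = iota Q' / rf i ^ N'" by blast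
  then show ?case using iota_rep_add by (metis DD_hom(1))
next
  case (4 p q)
  then obtain Q N Q' N' where "DD A U i p = iota Q / rf i ^ N" "DD A U i q = iota Q' / rf i ^ N'" by blast
  then show ?case using iota_rep_mult by (metis DD_hom(2))
qed

definition Eloc where
  "Eloc A U i x = (let QN = (SOME QN. x = iota (fst QN) / rf i ^ snd QN) in DD A U i (fst QN) / rf i ^ snd QN)"

lemma Eloc_eq:
  fixes A :: "('i::{finite,linorder}) \<Rightarrow> 'i \<Rightarrow> int"
  assumes Aii: "A i i = 2" and Uii: "U i i = 0"
    and x: "x = iota Q / rf i ^ N"
  shows "Eloc A U i x = DD A U i Q / rf i ^ N"
proof -
  define QN where "QN = (SOME QN. x = iota (fst QN) / rf i ^ snd QN)"
  have "\<exists>QN. x = iota (fst QN) / rf i ^ snd QN" using x by (intro exI[of _ "(Q,N)"]) simp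
  then have qn: "x = iota (fst QN) / rf i ^ snd QN" unfolding QN_def by (rule someI_ex)
  have nz: "rf i \<noteq> (0::'i ratfun)" by (rule rvar_nonzero)
  have "iota Q * rf i ^ snd QN = iota (fst QN) * rf i ^ N"
    using x qn nz by (simp add: field_simps)
  then have "iota (Q * pvar (True,i) ^ snd QN) = iota (fst QN * pvar (True,i) ^ N)"
    by (simp add: iota_mult iota_pow iota_var)
  then have "Q * pvar (True,i) ^ snd QN = fst QN * pvar (True,i) ^ N" by (simp add: iota_inj)
  then have "DD A U i (Q * pvar (True,i) ^ snd QN) = DD A U i (fst QN * pvar (True,i) ^ N)" by simp
  moreover have "DD A U i (pvar (True,i)) = rf i" using Uii by (simp add: DD_var_f rconst_0)
  ultimately have "DD A U i Q * rf i ^ snd QN = DD A U i (fst QN) * rf i ^ N"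
    by (simp add: DD_hom)
  then show ?thesis using nz unfolding Eloc_def QN_def[symmetric] Let_def
    by (simp add: field_simps)
qed

lemma Eloc_DD:
  fixes A :: "('i::{finite,linorder}) \<Rightarrow> 'i \<Rightarrow> int"
  assumes Aii: "A i i = 2" and Uii: "U i i = 0"
  shows "Eloc A U i (DD A U i P) = iota P"
proof (induct P rule: cpoly_induct)
  case (1 c)
  have "DD A U i (Poly_Mapping.single 0 c) = iota (Poly_Mapping.single 0 c) / rf i ^ 0"
    by (simp add: DD_hom iota_const)
  then have "Eloc A U i (DD A U i (Poly_Mapping.single 0 c)) = DD A U i (Poly_Mapping.single 0 c) / rf i ^ 0"
    by (rule Eloc_eq[where A=A and U=U and i=i, OF Aii Uii])
  then show ?case by (simp add: DD_hom iota_const)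
next
  case (2 v)
  obtain b j where v: "v = (b, j)" by (cases v)
  have nz: "rf i \<noteq> (0::'i ratfun)" by (rule rvar_nonzero)
  show ?case
  proof (cases b)
    case True
    have "DD A U i (pvar v) = iota (pvar (True, j) * pvar (True, i) + pvar (False, i) * Poly_Mapping.single 0 (U i j)) / rf i ^ 1"
      using v True nz
      by (simp add: DD_var_f iota_add iota_mult iota_var iota_const field_simps)
    then have "Eloc A U i (DD A U i (pvar v)) = DD A U i (pvar (True, j) * pvar (True, i) + pvar (False, i) * Poly_Mapping.single 0 (U i j)) / rf i ^ 1"
      using Eloc_eq[where A=A and U=U and i=i, OF Aii Uii] by blast
    also have "\<dots> = rf j"
      using nz Aii Uii
      by (simp add: DD_hom DD_var_f DD_var_a rconst_0 rconst_numeral field_simps)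
    finally show ?thesis using v True iota_var[of "(True,j)"] by (simp add: pvar_def)
  next
    case False
    have "DD A U i (pvar v) = iota (pvar (False, j) - Poly_Mapping.single 0 (of_int (A i j)) * pvar (False, i)) / rf i ^ 0"
      using v False
      by (simp add: DD_var_a iota_diff iota_mult iota_var iota_const iota_of_int rconst_of_int)
    then have "Eloc A U i (DD A U i (pvar v)) = DD A U i (pvar (False, j) - Poly_Mapping.single 0 (of_int (A i j)) * pvar (False, i)) / rf i ^ 0"
      using Eloc_eq[where A=A and U=U and i=i, OF Aii Uii] by blast
    also have "\<dots> = ralpha j"
      using Aii
      by (simp add: DD_hom DD_var_a DD_of_int rconst_of_int rconst_numeral algebra_simps)
    finally show ?thesis using v False iota_var[of "(False,j)"] by (simp add: pvar_def)
  qed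
next
  case (3 p q)
  obtain Q N Q' N' where r: "DD A U i p = iota Q / rf i ^ N" "DD A U i q = iota Q' / rf i ^ N'"
    using DD_rep by blast
  have "Eloc A U i (DD A U i (p + q)) = DD A U i (Q * pvar (True, i) ^ N' + Q' * pvar (True, i) ^ N) / rf i ^ (N + N')"
    using Eloc_eq[where A=A and U=U and i=i, OF Aii Uii iota_rep_add[OF r]] by (simp add: DD_hom)
  also have "\<dots> = Eloc A U i (DD A U i p) + Eloc A U i (DD A U i q)"
    using Eloc_eq[where A=A and U=U and i=i, OF Aii Uii r(1)] Eloc_eq[where A=A and U=U and i=i, OF Aii Uii r(2)] rvar_nonzero[of "(True,i)"] Uii
    by (simp add: DD_hom DD_var_f rconst_0 field_simps power_add)
  finally show ?case using 3 by (simp add: iota_add)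
next
  case (4 p q)
  obtain Q N Q' N' where r: "DD A U i p = iota Q / rf i ^ N" "DD A U i q = iota Q' / rf i ^ N'"
    using DD_rep by blast
  have "Eloc A U i (DD A U i (p * q)) = DD A U i (Q * Q') / rf i ^ (N + N')"
    using Eloc_eq[where A=A and U=U and i=i, OF Aii Uii iota_rep_mult[OF r]] by (simp add: DD_hom)
  also have "\<dots> = Eloc A U i (DD A U i p) * Eloc A U i (DD A U i q)"
    unfolding Eloc_eq[where A=A and U=U and i=i, OF Aii Uii r(1)] Eloc_eq[where A=A and U=U and i=i, OF Aii Uii r(2)]
    by (simp add: DD_hom power_add times_divide_times_eq)
  finally show ?case using 4 by (simp add: iota_mult)
qed

lemma DD_inj:
  fixes A :: "('i::{finite,linorder}) \<Rightarrow> 'i \<Rightarrow> int"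
  assumes Aii: "A i i = 2" and Uii: "U i i = 0" and z: "DD A U i P = 0"
  shows "P = 0"
proof -
  have "(0::'i ratfun) = iota 0 / rf i ^ 0" by (simp add: iota_0)
  then have "Eloc A U i 0 = DD A U i 0 / rf i ^ 0" using Eloc_eq[where A=A and U=U and i=i, OF Aii Uii] by blast
  then have "iota P = 0" using Eloc_DD[where A=A and U=U and i=i, OF Aii Uii, of P] z by (simp add: DD_hom)
  then show ?thesis using iota_inj[of P 0] by (simp add: iota_0)
qed


definition sfun where
  "sfun A U i x = (let ab = (SOME ab. snd ab \<noteq> 0 \<and> x = Fraction_Field.Fract (fst ab) (snd ab))
     in DD A U i (fst ab) / DD A U i (snd ab))"

lemma DD_nz:
  fixes A :: "('i::{finite,linorder}) \<Rightarrow> 'i \<Rightarrow> int"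
  assumes Aii: "A i i = 2" and Uii: "U i i = 0" and b: "b \<noteq> 0"
  shows "DD A U i b \<noteq> 0"
  using DD_inj[where A=A and U=U and i=i, OF Aii Uii] b by blast

lemma sfun_Fract:
  fixes A :: "('i::{finite,linorder}) \<Rightarrow> 'i \<Rightarrow> int"
  assumes Aii: "A i i = 2" and Uii: "U i i = 0" and b: "b \<noteq> 0"
  shows "sfun A U i (Fraction_Field.Fract a b) = DD A U i a / DD A U i b"
proof -
  define ab where "ab = (SOME ab. snd ab \<noteq> 0 \<and> Fraction_Field.Fract a b = Fraction_Field.Fract (fst ab) (snd ab))"
  have "\<exists>ab. snd ab \<noteq> 0 \<and> Fraction_Field.Fract a b = Fraction_Field.Fract (fst ab) (snd ab)"
    using b by (intro exI[of _ "(a,b)"]) simp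
  then have ab: "snd ab \<noteq> 0 \<and> Fraction_Field.Fract a b = Fraction_Field.Fract (fst ab) (snd ab)"
    unfolding ab_def by (rule someI_ex)
  then have "a * snd ab = fst ab * b" using eq_fract(1)[of b "snd ab" a "fst ab"] b by auto
  then have "DD A U i a * DD A U i (snd ab) = DD A U i (fst ab) * DD A U i b"
    by (metis DD_hom(2))
  moreover have "DD A U i (snd ab) \<noteq> 0" "DD A U i b \<noteq> 0"
    using DD_nz[where A=A and U=U and i=i, OF Aii Uii] ab b by auto
  ultimately show ?thesis unfolding sfun_def ab_def[symmetric] Let_def
    by (simp add: field_simps)
qed

lemma sfun_hom:
  fixes A :: "('i::{finite,linorder}) \<Rightarrow> 'i \<Rightarrow> int"
  assumes Aii: "A i i = 2" and Uii: "U i i = 0"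
  shows "C_alg_hom (sfun A U i)"
  unfolding C_alg_hom_def
proof (intro conjI allI)
  note sF = sfun_Fract[where A=A and U=U and i=i, OF Aii Uii]
  note nz = DD_nz[where A=A and U=U and i=i, OF Aii Uii]
  fix x y :: "'i ratfun"
  obtain a b where x: "x = Fraction_Field.Fract a b" "b \<noteq> 0" by (cases x)
  obtain c d where y: "y = Fraction_Field.Fract c d" "d \<noteq> 0" by (cases y)
  show "sfun A U i (x + y) = sfun A U i x + sfun A U i y"
    using x y nz[of b] nz[of d] by (simp add: sF DD_hom field_simps)
  show "sfun A U i (x * y) = sfun A U i x * sfun A U i y"
    using x y nz[of b] nz[of d] by (simp add: sF DD_hom)
next
  note sF = sfun_Fract[where A=A and U=U and i=i, OF Aii Uii]
  show "sfun A U i 1 = 1"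
    using sF[of 1 1] by (simp add: fract_collapse DD_hom)
  fix c
  show "sfun A U i (rconst c) = rconst c"
    using sF[of 1 "Poly_Mapping.single 0 c"] by (simp add: rconst_def DD_hom)
qed

lemma sfun_var:
  fixes A :: "('i::{finite,linorder}) \<Rightarrow> 'i \<Rightarrow> int"
  assumes Aii: "A i i = 2" and Uii: "U i i = 0"
  shows "sfun A U i (rvar v) = gimg A U i v"
proof -
  have "rvar v = Fraction_Field.Fract (pvar v) 1" by (simp add: rvar_def pvar_def)
  then show ?thesis
    using sfun_Fract[where A=A and U=U and i=i, OF Aii Uii, of 1 "pvar v"]
    by (simp add: DD_hom DD_def ev_var ev_1)
qed

lemma s_exists:
  fixes A :: "('i::{finite,linorder}) \<Rightarrow> 'i \<Rightarrow> int"
  assumes Aii: "\<And>i. A i i = 2" and Uii: "\<And>i. U i i = 0"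
  shows "is_s_family A U (sfun A U)"
  unfolding is_s_family_def
proof (intro allI conjI)
  fix i j
  show "C_alg_hom (sfun A U i)" by (rule sfun_hom[where A=A and U=U and i=i, OF Aii[of i] Uii[of i]])
  show "sfun A U i (ralpha j) = ralpha j - rconst (of_int (A i j)) * ralpha i"
    using sfun_var[where A=A and U=U and i=i, OF Aii[of i] Uii[of i], of "(False, j)"] by (simp add: gimg_def)
  show "sfun A U i (rf j) = rf j + ralpha i / rf i * rconst (U i j)"
    using sfun_var[where A=A and U=U and i=i, OF Aii[of i] Uii[of i], of "(True, j)"] by (simp add: gimg_def)
qed


definition rhom :: "('a::field \<Rightarrow> 'a) \<Rightarrow> bool" where
  "rhom f \<longleftrightarrow> (\<forall>x y. f (x + y) = f x + f y) \<and> (\<forall>x y. f (x * y) = f x * f y) \<and> f 1 = 1"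

lemma rhom_add: "rhom f \<Longrightarrow> f (x + y) = f x + f y" by (simp add: rhom_def)
lemma rhom_mult: "rhom f \<Longrightarrow> f (x * y) = f x * f y" by (simp add: rhom_def)
lemma rhom_1: "rhom f \<Longrightarrow> f 1 = 1" by (simp add: rhom_def)
lemma rhom_0: "rhom f \<Longrightarrow> f 0 = 0"
proof -
  assume h: "rhom f"
  have "f 0 + f 0 = f 0 + 0" using rhom_add[OF h, of 0 0] by simp
  then show ?thesis by (simp only: add_left_cancel)
qed
lemma rhom_minus: "rhom f \<Longrightarrow> f (- x) = - f x"
  using rhom_add[of f x "-x"] rhom_0[of f] by (simp add: add_eq_0_iff)
lemma rhom_diff: "rhom f \<Longrightarrow> f (x - y) = f x - f y"
  using rhom_add[of f x "-y"] rhom_minus[of f y] by simp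
lemma rhom_of_nat: "rhom f \<Longrightarrow> f (of_nat n) = of_nat n"
  by (induct n) (simp_all add: rhom_0 rhom_1 rhom_add)
lemma rhom_numeral: "rhom f \<Longrightarrow> f (numeral n) = numeral n"
  using rhom_of_nat[of f "numeral n"] by simp
lemma rhom_of_int: "rhom f \<Longrightarrow> f (of_int k) = of_int k"
  by (cases k rule: int_cases) (simp_all add: rhom_minus rhom_of_nat rhom_diff rhom_1)
lemma rhom_nz: "rhom f \<Longrightarrow> x \<noteq> 0 \<Longrightarrow> f x \<noteq> 0"
  using rhom_mult[of f x "inverse x"] rhom_1[of f] by auto
lemma rhom_inverse: "rhom f \<Longrightarrow> f (inverse x) = inverse (f x)"
proof (cases "x = 0")
  case True then show "rhom f \<Longrightarrow> ?thesis" by (simp add: rhom_0)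
next
  case False
  assume h: "rhom f"
  have "f x * f (inverse x) = 1" using rhom_mult[OF h, of x "inverse x"] rhom_1[OF h] False by simp
  then show ?thesis by (simp add: inverse_unique)
qed
lemma rhom_divide: "rhom f \<Longrightarrow> f (x / y) = f x / f y"
  by (simp add: divide_inverse rhom_mult rhom_inverse)
lemma rhom_power: "rhom f \<Longrightarrow> f (x ^ n) = f x ^ n"
  by (induct n) (simp_all add: rhom_1 rhom_mult)
lemma rhom_comp: "rhom f \<Longrightarrow> rhom g \<Longrightarrow> rhom (f \<circ> g)" by (simp add: rhom_def)
lemma rhom_id: "rhom id" by (simp add: rhom_def)
lemma rhom_funpow: "rhom f \<Longrightarrow> rhom (f ^^ n)"
  by (induct n) (simp_all add: rhom_id rhom_comp)

lemmas rhom_simps = rhom_add rhom_mult rhom_1 rhom_0 rhom_minus rhom_diff rhom_numeral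
  rhom_of_int rhom_divide rhom_power

fun Wl :: "('a \<Rightarrow> 'a) \<Rightarrow> ('a \<Rightarrow> 'a) \<Rightarrow> bool list \<Rightarrow> 'a \<Rightarrow> 'a" where
  "Wl s t [] = id"
| "Wl s t (b # bs) = (if b then s else t) \<circ> Wl s t bs"

fun Dl :: "('a \<Rightarrow> 'a) \<Rightarrow> ('a \<Rightarrow> 'a) \<Rightarrow> 'a::field \<Rightarrow> bool list \<Rightarrow> 'a" where
  "Dl s t p [] = 1"
| "Dl s t p (b # bs) = (if b then s (Dl s t p bs) else t (Dl s t p bs) * p)"

lemma Wl_track:
  fixes s t :: "'a::field \<Rightarrow> 'a"
  assumes hs: "rhom s" and ht: "rhom t" and sF: "s F = F" and tF: "t F * p = F * q"
  shows "Wl s t bs F * Dl s t p bs = F * Dl s t q bs"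
proof (induct bs)
  case Nil then show ?case by simp
next
  case (Cons b bs)
  show ?case
  proof (cases b)
    case True
    then show ?thesis using Cons rhom_mult[OF hs, of "Wl s t bs F" "Dl s t p bs"] rhom_mult[OF hs, of F]
      by (simp add: sF)
  next
    case False
    have "t (Wl s t bs F) * (t (Dl s t p bs) * p) = t (Wl s t bs F * Dl s t p bs) * p"
      by (simp add: rhom_mult[OF ht])
    also have "\<dots> = t F * p * t (Dl s t q bs)" using Cons by (simp add: rhom_mult[OF ht])
    also have "\<dots> = F * (t (Dl s t q bs) * q)" using tF by (simp add: algebra_simps)
    finally show ?thesis using False by simp
  qed
qed

lemma Dl_nz: "rhom s \<Longrightarrow> rhom t \<Longrightarrow> p \<noteq> 0 \<Longrightarrow> Dl s t p bs \<noteq> 0"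
  by (induct bs) (auto simp: rhom_nz)

lemma Wl_fix:
  fixes s t :: "'a::field \<Rightarrow> 'a"
  assumes hs: "rhom s" and ht: "rhom t" and sF: "s F = F" and tF: "t F * p = F * q"
    and p: "p \<noteq> 0" and eq: "Dl s t q bs = Dl s t p bs"
  shows "Wl s t bs F = F"
  using Wl_track[OF hs ht sF tF, of bs] Dl_nz[OF hs ht p, of bs] eq by simp

definition altw :: "nat \<Rightarrow> bool list" where "altw m = concat (replicate m [True, False])"

lemma Wl_altw: "Wl s t (altw m) = (s \<circ> t) ^^ m"
  by (induct m) (simp_all add: altw_def)

lemma core_0:
  fixes s t :: "'a::field \<Rightarrow> 'a"
  assumes hs: "rhom s" and ht: "rhom t" and sv: "s v = v" and tv: "t v = v"
    and s1: "s a1 = - a1" and s2: "s a2 = a2 + of_nat 0 * a1" and sp: "s p = p - of_nat 0 * v * a1"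
    and t2: "t a2 = - a2" and t1: "t a1 = a1 + of_nat 0 * a2" and tp: "t p = p + of_nat 0 * v * a2"
    and sF: "s F = F" and tF: "t F * p = F * (p + of_nat 0 * v * a2)" and p: "p \<noteq> 0"
  shows "((s \<circ> t) ^^ 2) a1 = a1 \<and> ((s \<circ> t) ^^ 2) a2 = a2 \<and> ((s \<circ> t) ^^ 2) p = p \<and> ((s \<circ> t) ^^ 2) F = F"
proof -
  note simps = numeral_eq_Suc rhom_simps[OF hs] rhom_simps[OF ht] sv tv s1 s2 sp t1 t2 tp
  have lin: "Wl s t (altw 2) a1 = a1 \<and> Wl s t (altw 2) a2 = a2 \<and> Wl s t (altw 2) p = p"
    unfolding altw_def by (simp add: simps algebra_simps)
  have "Dl s t (p + of_nat 0 * v * a2) (altw 2) = Dl s t p (altw 2)"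
    unfolding altw_def by (simp add: simps; algebra)
  then have "Wl s t (altw 2) F = F" by (rule Wl_fix[OF hs ht sF tF p])
  with lin show ?thesis by (simp add: Wl_altw)
qed

lemma core_1:
  fixes s t :: "'a::field \<Rightarrow> 'a"
  assumes hs: "rhom s" and ht: "rhom t" and sv: "s v = v" and tv: "t v = v"
    and s1: "s a1 = - a1" and s2: "s a2 = a2 + of_nat 1 * a1" and sp: "s p = p - of_nat 1 * v * a1"
    and t2: "t a2 = - a2" and t1: "t a1 = a1 + of_nat 1 * a2" and tp: "t p = p + of_nat 1 * v * a2"
    and sF: "s F = F" and tF: "t F * p = F * (p + of_nat 1 * v * a2)" and p: "p \<noteq> 0"
  shows "((s \<circ> t) ^^ 3) a1 = a1 \<and> ((s \<circ> t) ^^ 3) a2 = a2 \<and> ((s \<circ> t) ^^ 3) p = p \<and> ((s \<circ> t) ^^ 3) F = F"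
proof -
  note simps = numeral_eq_Suc rhom_simps[OF hs] rhom_simps[OF ht] sv tv s1 s2 sp t1 t2 tp
  have lin: "Wl s t (altw 3) a1 = a1 \<and> Wl s t (altw 3) a2 = a2 \<and> Wl s t (altw 3) p = p"
    unfolding altw_def by (simp add: simps algebra_simps)
  have "Dl s t (p + of_nat 1 * v * a2) (altw 3) = Dl s t p (altw 3)"
    unfolding altw_def by (simp add: simps; algebra)
  then have "Wl s t (altw 3) F = F" by (rule Wl_fix[OF hs ht sF tF p])
  with lin show ?thesis by (simp add: Wl_altw)
qed

lemma core_2:
  fixes s t :: "'a::field \<Rightarrow> 'a"
  assumes hs: "rhom s" and ht: "rhom t" and sv: "s v = v" and tv: "t v = v"
    and s1: "s a1 = - a1" and s2: "s a2 = a2 + of_nat 2 * a1" and sp: "s p = p - of_nat 1 * v * a1"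
    and t2: "t a2 = - a2" and t1: "t a1 = a1 + of_nat 1 * a2" and tp: "t p = p + of_nat 1 * v * a2"
    and sF: "s F = F" and tF: "t F * p = F * (p + of_nat 1 * v * a2)" and p: "p \<noteq> 0"
  shows "((s \<circ> t) ^^ 4) a1 = a1 \<and> ((s \<circ> t) ^^ 4) a2 = a2 \<and> ((s \<circ> t) ^^ 4) p = p \<and> ((s \<circ> t) ^^ 4) F = F"
proof -
  note simps = numeral_eq_Suc rhom_simps[OF hs] rhom_simps[OF ht] sv tv s1 s2 sp t1 t2 tp
  have lin: "Wl s t (altw 4) a1 = a1 \<and> Wl s t (altw 4) a2 = a2 \<and> Wl s t (altw 4) p = p"
    unfolding altw_def by (simp add: simps algebra_simps)
  have "Dl s t (p + of_nat 1 * v * a2) (altw 4) = Dl s t p (altw 4)"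
    unfolding altw_def by (simp add: simps; algebra)
  then have "Wl s t (altw 4) F = F" by (rule Wl_fix[OF hs ht sF tF p])
  with lin show ?thesis by (simp add: Wl_altw)
qed

lemma core_3:
  fixes s t :: "'a::field \<Rightarrow> 'a"
  assumes hs: "rhom s" and ht: "rhom t" and sv: "s v = v" and tv: "t v = v"
    and s1: "s a1 = - a1" and s2: "s a2 = a2 + of_nat 2 * a1" and sp: "s p = p - of_nat 2 * v * a1"
    and t2: "t a2 = - a2" and t1: "t a1 = a1 + of_nat 1 * a2" and tp: "t p = p + of_nat 1 * v * a2"
    and sF: "s F = F" and tF: "t F * p = F * (p + of_nat 1 * v * a2)" and p: "p \<noteq> 0"
  shows "((s \<circ> t) ^^ 4) a1 = a1 \<and> ((s \<circ> t) ^^ 4) a2 = a2 \<and> ((s \<circ> t) ^^ 4) p = p \<and> ((s \<circ> t) ^^ 4) F = F"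
proof -
  note simps = numeral_eq_Suc rhom_simps[OF hs] rhom_simps[OF ht] sv tv s1 s2 sp t1 t2 tp
  have lin: "Wl s t (altw 4) a1 = a1 \<and> Wl s t (altw 4) a2 = a2 \<and> Wl s t (altw 4) p = p"
    unfolding altw_def by (simp add: simps algebra_simps)
  have "Dl s t (p + of_nat 1 * v * a2) (altw 4) = Dl s t p (altw 4)"
    unfolding altw_def by (simp add: simps; algebra)
  then have "Wl s t (altw 4) F = F" by (rule Wl_fix[OF hs ht sF tF p])
  with lin show ?thesis by (simp add: Wl_altw)
qed

lemma core_4:
  fixes s t :: "'a::field \<Rightarrow> 'a"
  assumes hs: "rhom s" and ht: "rhom t" and sv: "s v = v" and tv: "t v = v"
    and s1: "s a1 = - a1" and s2: "s a2 = a2 + of_nat 3 * a1" and sp: "s p = p - of_nat 1 * v * a1"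
    and t2: "t a2 = - a2" and t1: "t a1 = a1 + of_nat 1 * a2" and tp: "t p = p + of_nat 1 * v * a2"
    and sF: "s F = F" and tF: "t F * p = F * (p + of_nat 1 * v * a2)" and p: "p \<noteq> 0"
  shows "((s \<circ> t) ^^ 6) a1 = a1 \<and> ((s \<circ> t) ^^ 6) a2 = a2 \<and> ((s \<circ> t) ^^ 6) p = p \<and> ((s \<circ> t) ^^ 6) F = F"
proof -
  note simps = numeral_eq_Suc rhom_simps[OF hs] rhom_simps[OF ht] sv tv s1 s2 sp t1 t2 tp
  have lin: "Wl s t (altw 6) a1 = a1 \<and> Wl s t (altw 6) a2 = a2 \<and> Wl s t (altw 6) p = p"
    unfolding altw_def by (simp add: simps algebra_simps)
  have "Dl s t (p + of_nat 1 * v * a2) (altw 6) = Dl s t p (altw 6)"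
    unfolding altw_def by (simp add: simps; algebra)
  then have "Wl s t (altw 6) F = F" by (rule Wl_fix[OF hs ht sF tF p])
  with lin show ?thesis by (simp add: Wl_altw)
qed

lemma core_5:
  fixes s t :: "'a::field \<Rightarrow> 'a"
  assumes hs: "rhom s" and ht: "rhom t" and sv: "s v = v" and tv: "t v = v"
    and s1: "s a1 = - a1" and s2: "s a2 = a2 + of_nat 3 * a1" and sp: "s p = p - of_nat 3 * v * a1"
    and t2: "t a2 = - a2" and t1: "t a1 = a1 + of_nat 1 * a2" and tp: "t p = p + of_nat 2 * v * a2"
    and sF: "s F = F" and tF: "t F * p = F * (p + of_nat 2 * v * a2)" and p: "p \<noteq> 0"
  shows "((s \<circ> t) ^^ 6) a1 = a1 \<and> ((s \<circ> t) ^^ 6) a2 = a2 \<and> ((s \<circ> t) ^^ 6) p = p \<and> ((s \<circ> t) ^^ 6) F = F"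
proof -
  note simps = numeral_eq_Suc rhom_simps[OF hs] rhom_simps[OF ht] sv tv s1 s2 sp t1 t2 tp
  have lin: "Wl s t (altw 6) a1 = a1 \<and> Wl s t (altw 6) a2 = a2 \<and> Wl s t (altw 6) p = p"
    unfolding altw_def by (simp add: simps algebra_simps)
  have "Dl s t (p + of_nat 2 * v * a2) (altw 6) = Dl s t p (altw 6)"
    unfolding altw_def by (simp add: simps; algebra)
  then have "Wl s t (altw 6) F = F" by (rule Wl_fix[OF hs ht sF tF p])
  with lin show ?thesis by (simp add: Wl_altw)
qed

lemma core_6:
  fixes s t :: "'a::field \<Rightarrow> 'a"
  assumes hs: "rhom s" and ht: "rhom t" and sv: "s v = v" and tv: "t v = v"
    and s1: "s a1 = - a1" and s2: "s a2 = a2 + of_nat 3 * a1" and sp: "s p = p - of_nat 2 * v * a1"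
    and t2: "t a2 = - a2" and t1: "t a1 = a1 + of_nat 1 * a2" and tp: "t p = p + of_nat 1 * v * a2"
    and sF: "s F = F" and tF: "t F * p = F * (p + of_nat 1 * v * a2)" and p: "p \<noteq> 0"
  shows "((s \<circ> t) ^^ 6) a1 = a1 \<and> ((s \<circ> t) ^^ 6) a2 = a2 \<and> ((s \<circ> t) ^^ 6) p = p \<and> ((s \<circ> t) ^^ 6) F = F"
proof -
  note simps = numeral_eq_Suc rhom_simps[OF hs] rhom_simps[OF ht] sv tv s1 s2 sp t1 t2 tp
  have lin: "Wl s t (altw 6) a1 = a1 \<and> Wl s t (altw 6) a2 = a2 \<and> Wl s t (altw 6) p = p"
    unfolding altw_def by (simp add: simps algebra_simps)
  have "Dl s t (p + of_nat 1 * v * a2) (altw 6) = Dl s t p (altw 6)"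
    unfolding altw_def by (simp add: simps; algebra)
  then have "Wl s t (altw 6) F = F" by (rule Wl_fix[OF hs ht sF tF p])
  with lin show ?thesis by (simp add: Wl_altw)
qed

lemma core_7:
  fixes s t :: "'a::field \<Rightarrow> 'a"
  assumes hs: "rhom s" and ht: "rhom t" and sv: "s v = v" and tv: "t v = v"
    and s1: "s a1 = - a1" and s2: "s a2 = a2 + of_nat 3 * a1" and sp: "s p = p - of_nat 3 * v * a1"
    and t2: "t a2 = - a2" and t1: "t a1 = a1 + of_nat 1 * a2" and tp: "t p = p + of_nat 1 * v * a2"
    and sF: "s F = F" and tF: "t F * p = F * (p + of_nat 1 * v * a2)" and p: "p \<noteq> 0"
  shows "((s \<circ> t) ^^ 6) a1 = a1 \<and> ((s \<circ> t) ^^ 6) a2 = a2 \<and> ((s \<circ> t) ^^ 6) p = p \<and> ((s \<circ> t) ^^ 6) F = F"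
proof -
  note simps = numeral_eq_Suc rhom_simps[OF hs] rhom_simps[OF ht] sv tv s1 s2 sp t1 t2 tp
  have lin: "Wl s t (altw 6) a1 = a1 \<and> Wl s t (altw 6) a2 = a2 \<and> Wl s t (altw 6) p = p"
    unfolding altw_def by (simp add: simps algebra_simps)
  have "Dl s t (p + of_nat 1 * v * a2) (altw 6) = Dl s t p (altw 6)"
    unfolding altw_def by (simp add: simps; algebra)
  then have "Wl s t (altw 6) F = F" by (rule Wl_fix[OF hs ht sF tF p])
  with lin show ?thesis by (simp add: Wl_altw)
qed


lemma C_alg_hom_rhom: "C_alg_hom (f :: ('i::linorder) ratfun \<Rightarrow> 'i ratfun) \<Longrightarrow> rhom f"
  by (simp add: C_alg_hom_def rhom_def)
lemma C_alg_hom_comp: "C_alg_hom f \<Longrightarrow> C_alg_hom g \<Longrightarrow> C_alg_hom (f \<circ> g)"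
  by (simp add: C_alg_hom_def)
lemma C_alg_hom_id: "C_alg_hom id"
  by (simp add: C_alg_hom_def)
lemma C_alg_hom_funpow: "C_alg_hom f \<Longrightarrow> C_alg_hom (f ^^ n)"
  by (induct n) (simp_all add: C_alg_hom_id C_alg_hom_comp)
lemma C_alg_hom_rconst: "C_alg_hom f \<Longrightarrow> f (rconst c) = rconst c"
  by (simp add: C_alg_hom_def)

lemma C_alg_hom_iota:
  fixes f :: "('i::{finite,linorder}) ratfun \<Rightarrow> 'i ratfun"
  assumes h: "C_alg_hom f" and v: "\<And>v. f (rvar v) = rvar v"
  shows "f (iota P) = iota P"
proof (induct P rule: cpoly_induct)
  case (1 c) then show ?case using h by (simp add: iota_const C_alg_hom_rconst)
next
  case (2 v) then show ?case using v iota_var[of v] by (simp add: pvar_def)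
next
  case (3 p q) then show ?case using rhom_add[OF C_alg_hom_rhom[OF h]] by (simp add: iota_add)
next
  case (4 p q) then show ?case using rhom_mult[OF C_alg_hom_rhom[OF h]] by (simp add: iota_mult)
qed

lemma C_alg_hom_id_unique:
  fixes f :: "('i::{finite,linorder}) ratfun \<Rightarrow> 'i ratfun"
  assumes h: "C_alg_hom f" and fa: "\<And>k. f (ralpha k) = ralpha k" and fb: "\<And>k. f (rf k) = rf k"
  shows "f = id"
proof
  fix x :: "'i ratfun"
  have v: "f (rvar v) = rvar v" for v
  proof (cases v)
    case (Pair c k) then show ?thesis using fa fb by (cases c) auto
  qed
  obtain a b where x: "x = Fraction_Field.Fract a b" "b \<noteq> 0" by (cases x)
  then show "f x = id x"
    using C_alg_hom_iota[OF h v] rhom_divide[OF C_alg_hom_rhom[OF h]] by (simp add: Fract_iota)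
qed

lemma fix_both: "s x = x \<Longrightarrow> t x = x \<Longrightarrow> ((s \<circ> t) ^^ m) x = x"
  by (induct m) simp_all

lemma fam_hom: "is_s_family A U s \<Longrightarrow> C_alg_hom (s i)"
  by (simp add: is_s_family_def)
lemma fam_a: "is_s_family A U s \<Longrightarrow> s i (ralpha j) = ralpha j - of_int (A i j) * ralpha i"
  by (simp add: is_s_family_def rconst_of_int)
lemma fam_f: "is_s_family A U s \<Longrightarrow> s i (rf j) = rf j + ralpha i / rf i * rconst (U i j)"
  by (simp add: is_s_family_def)

lemma involution:
  fixes A :: "('i::{finite,linorder}) \<Rightarrow> 'i \<Rightarrow> int"
  assumes fam: "is_s_family A U s" and Aii: "A i i = 2" and Uii: "U i i = 0"
  shows "s i \<circ> s i = id"
proof (rule C_alg_hom_id_unique)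
  have h: "rhom (s i)" by (rule C_alg_hom_rhom[OF fam_hom[OF fam]])
  show "C_alg_hom (s i \<circ> s i)" using fam_hom[OF fam] by (simp add: C_alg_hom_comp)
  fix k
  show "(s i \<circ> s i) (ralpha k) = ralpha k"
    using Aii by (simp add: rhom_simps[OF h] fam_a[OF fam] algebra_simps)
  have "s i (rf i) = rf i" using fam_f[OF fam, of i i] Uii by (simp add: rconst_0)
  then show "(s i \<circ> s i) (rf k) = rf k"
    using Aii Uii rvar_nonzero[of "(True,i)"]
    by (simp add: rhom_simps[OF h] fam_a[OF fam] fam_f[OF fam] C_alg_hom_rconst[OF fam_hom[OF fam]] Uii rconst_0 field_simps)
qed

lemma rank2_ext:
  fixes A :: "('i::{finite,linorder}) \<Rightarrow> 'i \<Rightarrow> int"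
  assumes fam: "is_s_family A U s" and Aii: "A i i = 2" "A j j = 2" and Uii: "U i i = 0" "U j j = 0"
    and det: "A i j * A j i \<noteq> 4" and Uz: "U i j = 0 \<longleftrightarrow> U j i = 0"
    and W1: "((s i \<circ> s j) ^^ m) (ralpha i) = ralpha i"
    and W2: "((s i \<circ> s j) ^^ m) (ralpha j) = ralpha j"
    and W3: "((s i \<circ> s j) ^^ m) (rf i * rf j) = rf i * rf j"
    and W4: "((s i \<circ> s j) ^^ m) (rf i) = rf i"
  shows "(s i \<circ> s j) ^^ m = id"
proof -
  let ?W = "(s i \<circ> s j) ^^ m"
  have hW: "C_alg_hom ?W" using fam_hom[OF fam] by (simp add: C_alg_hom_comp C_alg_hom_funpow)
  have rW: "rhom ?W" by (rule C_alg_hom_rhom[OF hW])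
  have rs: "rhom (s i)" "rhom (s j)" using fam_hom[OF fam] C_alg_hom_rhom by blast+
  have cs: "s i (rconst x) = rconst x" "s j (rconst x) = rconst x" "?W (rconst x) = rconst x" for x
    using fam_hom[OF fam] hW C_alg_hom_rconst by blast+
  have nzi: "rf i \<noteq> 0" and nzj: "rf j \<noteq> 0" by (rule rvar_nonzero)+
  define dt where "dt = 4 - A i j * A j i"
  have "dt \<noteq> 0" using det by (simp add: dt_def)
  then have dtnz: "(of_int dt :: complex) \<noteq> 0" by simp
  define c :: "'i ratfun" where "c = rconst (1 / of_int dt)"
  have c1: "c * (4 - of_int (A i j) * of_int (A j i)) = 1"
  proof -
    have "c * rconst (of_int dt) = 1" unfolding c_def rconst_mult[symmetric] using dtnz by (simp add: rconst_1)
    moreover have "rconst (of_int dt) = (4 - of_int (A i j) * of_int (A j i) :: 'i ratfun)"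
      unfolding rconst_of_int by (simp add: dt_def)
    ultimately show ?thesis by simp
  qed
  have sc: "s i c = c" "s j c = c" "?W c = c" unfolding c_def using cs by blast+
  have Wa: "?W (ralpha k) = ralpha k" for k
  proof -
    define la :: "'i ratfun" where "la = c * of_int (- 2 * A i k + A i j * A j k)"
    define mu :: "'i ratfun" where "mu = c * of_int (- 2 * A j k + A j i * A i k)"
    define g where "g = ralpha k + la * ralpha i + mu * ralpha j"
    have "s i g - g = - (of_int (A i k) + 2 * la + of_int (A i j) * mu) * ralpha i"
      unfolding g_def la_def mu_def
      by (simp add: rhom_simps[OF rs(1)] fam_a[OF fam] sc Aii algebra_simps)
    moreover have "of_int (A i k) + 2 * la + of_int (A i j) * mu = 0"
      unfolding la_def mu_def using c1 by simp algebra
    ultimately have gi: "s i g = g" by simp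
    have "s j g - g = - (of_int (A j k) + of_int (A j i) * la + 2 * mu) * ralpha j"
      unfolding g_def la_def mu_def
      by (simp add: rhom_simps[OF rs(2)] fam_a[OF fam] sc Aii algebra_simps)
    moreover have "of_int (A j k) + of_int (A j i) * la + 2 * mu = 0"
      unfolding la_def mu_def using c1 by simp algebra
    ultimately have gj: "s j g = g" by simp
    have "?W g = g" by (rule fix_both[where s="s i" and t="s j", OF gi gj])
    moreover have "ralpha k = g - la * ralpha i - mu * ralpha j" by (simp add: g_def)
    ultimately show ?thesis
      by (simp add: rhom_simps[OF rW] W1 W2 la_def mu_def sc)
  qed
  have Wf: "?W (rf k) = rf k" for k
  proof (cases "U i j = 0")
    case False
    then have Uji: "U j i \<noteq> 0" using Uz by simp
    have W5: "?W (rf j) = rf j"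
    proof -
      have "rf j = (rf i * rf j) / rf i" using nzi by simp
      then show ?thesis using W3 W4 by (metis rhom_divide[OF rW])
    qed
    define c1 where "c1 = U i k / U i j"
    define c2 where "c2 = U j k / U j i"
    define g where "g = rf k - rconst c1 * rf j - rconst c2 * rf i"
    have si: "s i (rf i) = rf i" "s j (rf j) = rf j" using Uii by (simp_all add: fam_f[OF fam] rconst_0)
    have "s i g - g = ralpha i / rf i * rconst (U i k - c1 * U i j)"
      unfolding g_def
      by (simp add: rhom_simps[OF rs(1)] fam_f[OF fam] si cs Uii rconst_0 rconst_diff rconst_mult algebra_simps)
    moreover have "U i k - c1 * U i j = 0" using False by (simp add: c1_def)
    ultimately have gi: "s i g = g" by (simp add: rconst_0)
    have "s j g - g = ralpha j / rf j * rconst (U j k - c2 * U j i)"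
      unfolding g_def
      by (simp add: rhom_simps[OF rs(2)] fam_f[OF fam] si cs Uii rconst_0 rconst_diff rconst_mult algebra_simps)
    moreover have "U j k - c2 * U j i = 0" using Uji by (simp add: c2_def)
    ultimately have gj: "s j g = g" by (simp add: rconst_0)
    have "?W g = g" by (rule fix_both[where s="s i" and t="s j", OF gi gj])
    moreover have "rf k = g + rconst c1 * rf j + rconst c2 * rf i" by (simp add: g_def)
    ultimately show ?thesis
      by (simp add: rhom_simps[OF rW] W4 W5 cs)
  next
    case True
    then have Uji: "U j i = 0" using Uz by simp
    have si: "s i (rf i) = rf i" "s j (rf j) = rf j" "s i (rf j) = rf j" "s j (rf i) = rf i"
      using Uii True Uji by (simp_all add: fam_f[OF fam] rconst_0)
    have W5: "?W (rf j) = rf j" by (rule fix_both[where s="s i" and t="s j"]) (simp_all add: si)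
    define X where "X = rconst (U i k) / rf i"
    define Y where "Y = rconst (U j k) / rf j"
    define la where "la = c * (2 * X - of_int (A i j) * Y)"
    define mu where "mu = c * (2 * Y - of_int (A j i) * X)"
    define g where "g = rf k + la * ralpha i + mu * ralpha j"
    have sik: "s i (rf k) = rf k + X * ralpha i" by (simp add: fam_f[OF fam] X_def)
    have sjk: "s j (rf k) = rf k + Y * ralpha j" by (simp add: fam_f[OF fam] Y_def)
    have sXY: "s i X = X" "s j X = X" "s i Y = Y" "s j Y = Y" "?W X = X" "?W Y = Y"
      unfolding X_def Y_def
      by (simp_all add: rhom_simps[OF rs(1)] rhom_simps[OF rs(2)] rhom_simps[OF rW] si cs W4 W5)
    have "s i g - g = (X - 2 * la - of_int (A i j) * mu) * ralpha i"
      unfolding g_def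
      by (simp add: rhom_simps[OF rs(1)] sik fam_a[OF fam] la_def mu_def sXY sc si Aii algebra_simps)
    moreover have "X - 2 * la - of_int (A i j) * mu = 0"
      unfolding la_def mu_def using c1 by algebra
    ultimately have gi: "s i g = g" by simp
    have "s j g - g = (Y - of_int (A j i) * la - 2 * mu) * ralpha j"
      unfolding g_def
      by (simp add: rhom_simps[OF rs(2)] sjk fam_a[OF fam] la_def mu_def sXY sc si Aii algebra_simps)
    moreover have "Y - of_int (A j i) * la - 2 * mu = 0"
      unfolding la_def mu_def using c1 by algebra
    ultimately have gj: "s j g = g" by simp
    have "?W g = g" by (rule fix_both[where s="s i" and t="s j", OF gi gj])
    moreover have "rf k = g - la * ralpha i - mu * ralpha j" by (simp add: g_def)
    ultimately show ?thesis
      by (simp add: rhom_simps[OF rW] W1 W2 la_def mu_def sXY sc)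
  qed
  show ?thesis by (rule C_alg_hom_id_unique[OF hW Wa Wf])
qed


lemma core_hyps:
  fixes A :: "('i::{finite,linorder}) \<Rightarrow> 'i \<Rightarrow> int"
  assumes fam: "is_s_family A U s" and Aii: "A i i = 2" "A j j = 2" and Uii: "U i i = 0" "U j j = 0"
    and n: "A i j = - of_nat n" and k: "A j i = - of_nat k"
    and d: "U j i = of_nat d * v" and e: "U i j = - (of_nat e * v)"
  shows "rhom (s i)" "rhom (s j)" "s i (rconst v) = rconst v" "s j (rconst v) = rconst v"
    "s i (ralpha i) = - ralpha i" "s i (ralpha j) = ralpha j + of_nat n * ralpha i"
    "s i (rf i * rf j) = rf i * rf j - of_nat e * rconst v * ralpha i"
    "s j (ralpha j) = - ralpha j" "s j (ralpha i) = ralpha i + of_nat k * ralpha j"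
    "s j (rf i * rf j) = rf i * rf j + of_nat d * rconst v * ralpha j"
    "s i (rf i) = rf i"
    "s j (rf i) * (rf i * rf j) = rf i * (rf i * rf j + of_nat d * rconst v * ralpha j)"
    "rf i * rf j \<noteq> 0"
proof -
  show hi: "rhom (s i)" and hj: "rhom (s j)" using fam_hom[OF fam] C_alg_hom_rhom by blast+
  show "s i (rconst v) = rconst v" "s j (rconst v) = rconst v" using fam_hom[OF fam] C_alg_hom_rconst by blast+
  have nzi: "rf i \<noteq> 0" and nzj: "rf j \<noteq> 0" by (rule rvar_nonzero)+
  have ci: "rconst (U i j) = - (of_nat e * rconst v)" using e by (simp add: rconst_minus rconst_mult rconst_of_nat)
  have cj: "rconst (U j i) = of_nat d * rconst v" using d by (simp add: rconst_mult rconst_of_nat)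
  show "s i (ralpha i) = - ralpha i" "s i (ralpha j) = ralpha j + of_nat n * ralpha i"
    "s j (ralpha j) = - ralpha j" "s j (ralpha i) = ralpha i + of_nat k * ralpha j"
    using Aii n k by (simp_all add: fam_a[OF fam])
  show sii: "s i (rf i) = rf i" using Uii by (simp add: fam_f[OF fam] rconst_0)
  show "s i (rf i * rf j) = rf i * rf j - of_nat e * rconst v * ralpha i"
    using nzi Uii by (simp add: rhom_mult[OF hi] sii fam_f[OF fam] ci rconst_0 field_simps)
  show "s j (rf i * rf j) = rf i * rf j + of_nat d * rconst v * ralpha j"
    using nzj Aii Uii by (simp add: rhom_mult[OF hj] fam_f[OF fam] cj rconst_0 field_simps)
  show "s j (rf i) * (rf i * rf j) = rf i * (rf i * rf j + of_nat d * rconst v * ralpha j)"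
    using nzj by (simp add: fam_f[OF fam] cj field_simps)
  show "rf i * rf j \<noteq> 0" using nzi nzj by simp
qed

lemma rank2:
  fixes A :: "('i::{finite,linorder}) \<Rightarrow> 'i \<Rightarrow> int"
  assumes fam: "is_s_family A U s" and Aii: "\<And>i. A i i = 2" and Uii: "\<And>i. U i i = 0"
    and n: "A i j = - of_nat n" and k: "A j i = - of_nat k"
    and d: "U j i = of_nat d * v" and e: "U i j = - (of_nat e * v)"
    and det: "A i j * A j i \<noteq> 4" and Uz: "U i j = 0 \<longleftrightarrow> U j i = 0"
    and cs: "(n,k,e,d,m) \<in> {(0,0,0,0,2),(1,1,1,1,3),(2,1,1,1,4),(2,1,2,1,4),(3,1,1,1,6),(3,1,3,2,6),(3,1,2,1,6),(3,1,3,1,6)}"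
  shows "(s i \<circ> s j) ^^ m = id"
proof -
  note H = core_hyps[OF fam Aii[of i] Aii[of j] Uii[of i] Uii[of j] n k d e]
  have W: "((s i \<circ> s j) ^^ m) (ralpha i) = ralpha i \<and> ((s i \<circ> s j) ^^ m) (ralpha j) = ralpha j
     \<and> ((s i \<circ> s j) ^^ m) (rf i * rf j) = rf i * rf j \<and> ((s i \<circ> s j) ^^ m) (rf i) = rf i"
  proof -
    from cs consider "n = 0" "k = 0" "e = 0" "d = 0" "m = 2" | "n = 1" "k = 1" "e = 1" "d = 1" "m = 3" | "n = 2" "k = 1" "e = 1" "d = 1" "m = 4" | "n = 2" "k = 1" "e = 2" "d = 1" "m = 4" | "n = 3" "k = 1" "e = 1" "d = 1" "m = 6" | "n = 3" "k = 1" "e = 3" "d = 2" "m = 6" | "n = 3" "k = 1" "e = 2" "d = 1" "m = 6" | "n = 3" "k = 1" "e = 3" "d = 1" "m = 6" by auto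
    then show ?thesis
    proof cases
      case 1
      note H = core_hyps[OF fam Aii[of i] Aii[of j] Uii[of i] Uii[of j] n[unfolded 1(1)] k[unfolded 1(2)] d[unfolded 1(4)] e[unfolded 1(3)]]
      show ?thesis using core_0[OF H] 1(5) by simp
    next
      case 2
      note H = core_hyps[OF fam Aii[of i] Aii[of j] Uii[of i] Uii[of j] n[unfolded 2(1)] k[unfolded 2(2)] d[unfolded 2(4)] e[unfolded 2(3)]]
      show ?thesis using core_1[OF H] 2(5) by simp
    next
      case 3
      note H = core_hyps[OF fam Aii[of i] Aii[of j] Uii[of i] Uii[of j] n[unfolded 3(1)] k[unfolded 3(2)] d[unfolded 3(4)] e[unfolded 3(3)]]
      show ?thesis using core_2[OF H] 3(5) by simp
    next
      case 4
      note H = core_hyps[OF fam Aii[of i] Aii[of j] Uii[of i] Uii[of j] n[unfolded 4(1)] k[unfolded 4(2)] d[unfolded 4(4)] e[unfolded 4(3)]]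
      show ?thesis using core_3[OF H] 4(5) by simp
    next
      case 5
      note H = core_hyps[OF fam Aii[of i] Aii[of j] Uii[of i] Uii[of j] n[unfolded 5(1)] k[unfolded 5(2)] d[unfolded 5(4)] e[unfolded 5(3)]]
      show ?thesis using core_4[OF H] 5(5) by simp
    next
      case 6
      note H = core_hyps[OF fam Aii[of i] Aii[of j] Uii[of i] Uii[of j] n[unfolded 6(1)] k[unfolded 6(2)] d[unfolded 6(4)] e[unfolded 6(3)]]
      show ?thesis using core_5[OF H] 6(5) by simp
    next
      case 7
      note H = core_hyps[OF fam Aii[of i] Aii[of j] Uii[of i] Uii[of j] n[unfolded 7(1)] k[unfolded 7(2)] d[unfolded 7(4)] e[unfolded 7(3)]]
      show ?thesis using core_6[OF H] 7(5) by simp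
    next
      case 8
      note H = core_hyps[OF fam Aii[of i] Aii[of j] Uii[of i] Uii[of j] n[unfolded 8(1)] k[unfolded 8(2)] d[unfolded 8(4)] e[unfolded 8(3)]]
      show ?thesis using core_7[OF H] 8(5) by simp
    qed
  qed
  show ?thesis
    using rank2_ext[OF fam Aii[of i] Aii[of j] Uii[of i] Uii[of j] det Uz] W by blast
qed

lemma conj_funpow: "a \<circ> (b \<circ> a) ^^ m = (a \<circ> b) ^^ m \<circ> a"
proof (induct m)
  case 0 then show ?case by simp
next
  case (Suc m)
  have "a \<circ> (b \<circ> a) ^^ Suc m = (a \<circ> b) \<circ> (a \<circ> (b \<circ> a) ^^ m)" by (simp add: comp_assoc)
  also have "\<dots> = (a \<circ> b) \<circ> ((a \<circ> b) ^^ m \<circ> a)" by (simp only: Suc.hyps)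
  also have "\<dots> = (a \<circ> b) ^^ Suc m \<circ> a" by (simp only: funpow.simps(2) comp_assoc)
  finally show ?case .
qed

lemma swap_cox:
  assumes a: "a \<circ> a = id" and b: "b \<circ> b = id" and ba: "(b \<circ> a) ^^ m = id"
  shows "(a \<circ> b) ^^ m = id"
proof -
  have "(a \<circ> b) ^^ m = (a \<circ> b) ^^ m \<circ> (a \<circ> a)" using a by simp
  also have "\<dots> = a \<circ> (b \<circ> a) ^^ m \<circ> a" by (simp add: conj_funpow comp_assoc)
  also have "\<dots> = id" using ba a by simp
  finally show ?thesis .
qed


lemma cox_m_sym: "cox_m A i j = cox_m A j i"
  by (simp add: cox_m_def mult.commute)

lemma oriented:
  fixes A :: "('i::{finite,linorder}) \<Rightarrow> 'i \<Rightarrow> int"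
  assumes fam: "is_s_family A U s" and Aii: "\<And>i. A i i = 2" and Uii: "\<And>i. U i i = 0"
    and h0: "\<And>i j. i = j \<or> A i j = 0 \<Longrightarrow> U i j = 0"
    and h1: "\<And>i j. (A i j, A j i) = (-1, -1) \<Longrightarrow> U i j = - U j i"
    and h2: "\<And>i j. (A i j, A j i) = (-2, -1) \<Longrightarrow> U i j = - U j i \<or> U i j = - 2 * U j i"
    and h3: "\<And>i j. (A i j, A j i) = (-3, -1) \<Longrightarrow>
           U i j = - U j i \<or> U i j = - (3/2) * U j i \<or> U i j = - 2 * U j i \<or> U i j = - 3 * U j i"
    and ab: "(A i j, A j i) \<in> {(0,0),(-1,-1),(-2,-1),(-3,-1)}"
    and m: "cox_m A i j = Some m"
  shows "(s i \<circ> s j) ^^ m = id"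
proof -
  note R = rank2[OF fam Aii Uii]
  from ab consider "A i j = 0" "A j i = 0" | "A i j = -1" "A j i = -1" | "A i j = -2" "A j i = -1"
    | "A i j = -3" "A j i = -1" by auto
  then show ?thesis
  proof cases
    case 1
    then have "m = 2" using m by (simp add: cox_m_def)
    moreover have "U i j = 0" "U j i = 0" using h0[of i j] h0[of j i] 1 by auto
    ultimately show ?thesis using 1 by (intro R[of i j 0 0 0 0 0]) simp_all
  next
    case 2
    then have "m = 3" using m by (simp add: cox_m_def)
    moreover have "U i j = - U j i" using h1[of i j] 2 by auto
    ultimately show ?thesis using 2 by (intro R[of i j 1 1 1 "U j i" 1]) simp_all
  next
    case 3
    then have mm: "m = 4" using m by (simp add: cox_m_def)
    from h2[of i j] 3 have "U i j = - U j i \<or> U i j = - 2 * U j i" by auto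
    then show ?thesis
    proof
      assume "U i j = - U j i" then show ?thesis using 3 mm by (intro R[of i j 2 1 1 "U j i" 1]) simp_all
    next
      assume "U i j = - 2 * U j i" then show ?thesis using 3 mm by (intro R[of i j 2 1 1 "U j i" 2]) simp_all
    qed
  next
    case 4
    then have mm: "m = 6" using m by (simp add: cox_m_def)
    from h3[of i j] 4 have "U i j = - U j i \<or> U i j = - (3/2) * U j i \<or> U i j = - 2 * U j i \<or> U i j = - 3 * U j i" by auto
    then show ?thesis
    proof (elim disjE)
      assume "U i j = - U j i" then show ?thesis using 4 mm by (intro R[of i j 3 1 1 "U j i" 1]) simp_all
    next
      assume "U i j = - (3/2) * U j i" then show ?thesis using 4 mm by (intro R[of i j 3 1 2 "U j i / 2" 3]) simp_all
    next
      assume "U i j = - 2 * U j i" then show ?thesis using 4 mm by (intro R[of i j 3 1 1 "U j i" 2]) simp_all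
    next
      assume "U i j = - 3 * U j i" then show ?thesis using 4 mm by (intro R[of i j 3 1 1 "U j i" 3]) simp_all
    qed
  qed
qed

lemma int_pair_cases:
  fixes a b :: int
  assumes a: "a \<le> 0" and b: "b \<le> 0" and z: "a = 0 \<longleftrightarrow> b = 0" and p: "a * b \<in> {0,1,2,3}"
  shows "(a, b) \<in> {(0,0),(-1,-1),(-2,-1),(-3,-1)} \<or> (b, a) \<in> {(0,0),(-1,-1),(-2,-1),(-3,-1)}"
proof (cases "a = 0")
  case True then show ?thesis using z by simp
next
  case False
  then have a1: "a \<le> -1" "b \<le> -1" using a b z by auto
  have "(-a) * 1 \<le> (-a) * (-b)" using a1 by (intro mult_left_mono) auto
  then have "-a \<le> 3" using p by auto
  have "(-b) * 1 \<le> (-b) * (-a)" using a1 by (intro mult_left_mono) auto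
  then have "-b \<le> 3" using p by (auto simp: mult.commute)
  have "a \<in> {-1,-2,-3}" "b \<in> {-1,-2,-3}" using a1 \<open>-a \<le> 3\<close> \<open>-b \<le> 3\<close> by auto
  then show ?thesis using p by (elim insertE emptyE; simp)
qed

theorem theorem1:
  fixes A :: "'i::{finite,linorder} \<Rightarrow> 'i \<Rightarrow> int" and U :: "'i \<Rightarrow> 'i \<Rightarrow> complex"
  assumes "gcm A"
    and "\<And>i j. i = j \<or> A i j = 0 \<Longrightarrow> U i j = 0"
    and "\<And>i j. (A i j, A j i) = (-1, -1) \<Longrightarrow> U i j = - U j i"
    and "\<And>i j. (A i j, A j i) = (-2, -1) \<Longrightarrow> U i j = - U j i \<or> U i j = - 2 * U j i"
    and "\<And>i j. (A i j, A j i) = (-3, -1) \<Longrightarrow>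
           U i j = - U j i \<or> U i j = - (3/2) * U j i \<or> U i j = - 2 * U j i \<or> U i j = - 3 * U j i"
  shows "(\<exists>s. is_s_family A U s)
    \<and> (\<forall>s. is_s_family A U s \<longrightarrow>
          (\<forall>i. s i \<circ> s i = id) \<and>
          (\<forall>i j m. i \<noteq> j \<longrightarrow> cox_m A i j = Some m \<longrightarrow> (s i \<circ> s j) ^^ m = id))"
proof -
  have Aii: "\<And>i. A i i = 2" using assms(1) by (simp add: gcm_def)
  have Uii: "\<And>i. U i i = 0" using assms(2) by blast
  have nonpos: "\<And>i j. i \<noteq> j \<Longrightarrow> A i j \<le> 0" using assms(1) by (simp add: gcm_def)
  have zs: "\<And>i j. A i j = 0 \<longleftrightarrow> A j i = 0" using assms(1) by (simp add: gcm_def)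
  show ?thesis
  proof (intro conjI allI impI)
    show "\<exists>s. is_s_family A U s" using s_exists[where A=A and U=U, OF Aii Uii] by blast
  next
    fix s i
    assume fam: "is_s_family A U s"
    show "s i \<circ> s i = id" by (rule involution[where A=A and U=U and i=i, OF fam Aii[of i] Uii[of i]])
  next
    fix s i j m
    assume fam: "is_s_family A U s" and ij: "i \<noteq> j" and cox: "cox_m A i j = Some m"
    have inv: "\<And>i. s i \<circ> s i = id"
      using involution[where A=A and U=U, OF fam Aii Uii] by blast
    have p: "A i j * A j i \<in> {0,1,2,3}" using cox by (auto simp: cox_m_def Let_def split: if_splits)
    from int_pair_cases[OF nonpos[OF ij] nonpos[OF not_sym[OF ij]] zs[of i j] p]
    show "(s i \<circ> s j) ^^ m = id"
    proof (elim disjE)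
      assume "(A i j, A j i) \<in> {(0, 0), (- 1, - 1), (- 2, - 1), (- 3, - 1)}"
      then show ?thesis using cox by (intro oriented[OF fam Aii Uii assms(2-5)])
    next
      assume "(A j i, A i j) \<in> {(0, 0), (- 1, - 1), (- 2, - 1), (- 3, - 1)}"
      then have "(s j \<circ> s i) ^^ m = id"
        using cox cox_m_sym[of A i j] by (intro oriented[OF fam Aii Uii assms(2-5)]) auto
      then show ?thesis by (rule swap_cox[OF inv inv])
    qed
  qed
qed


end
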